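(* Let $n\ge 1$ and $s>0$. Let $B$ be a random $n\times n$ matrix whose entries are i.i.d. with a continuous distribution (with density) supported on $[-1,1]$ and symmetric around $0$, and let $A=U+sB$, where $U$ is the $n\times n$ all-ones matrix. Then the probability that $A$ is an equilibrium is at least $2^{-(2n-1)}$, where $A$ is called an equilibrium if there exist a real $a>1$ and vectors $x,y\in\mathbb{R}^n$ with nonnegative entries, each summing to $1$, such that $Ax=a\mathbf{1}$ and $A^Ty=a\mathbf{1}$ (here $\mathbf{1}$ is the all-ones vector). *)

theory Defs
  imports "HOL-Probability.Probability"
begin

definition equilibrium :: "real^'n^'n \<Rightarrow> bool" where
  "equilibrium A \<longleftrightarrow>
     (\<exists>a::real. a > 1 \<and> (\<exists>x y :: real^'n.
        (\<forall>i. x $ i \<ge> 0) \<and> (\<Sum>i\<in>UNIV. x $ i) = 1 \<and>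
        (\<forall>i. y $ i \<ge> 0) \<and> (\<Sum>i\<in>UNIV. y $ i) = 1 \<and>
        A *v x = (\<chi> i. a) \<and> transpose A *v y = (\<chi> i. a)))"

definition perturbed_ones :: "real \<Rightarrow> ('n \<times> 'n \<Rightarrow> real) \<Rightarrow> real^'n^'n" where
  "perturbed_ones s B = (\<chi> i j. 1 + s * B (i, j))"

end

theory Submission
  imports Defs
begin



lemma sum_upd_mult:
  fixes f g :: "'n::finite \<Rightarrow> real"
  shows "(\<Sum>j\<in>UNIV. (f(a:=t)) j * g j) = (\<Sum>j\<in>UNIV. f j * g j) + (t - f a) * g a"
proof -
  have "(\<Sum>j\<in>UNIV. (f(a:=t)) j * g j) = t * g a + (\<Sum>j\<in>UNIV-{a}. f j * g j)"
    by (simp add: sum.remove[of UNIV a])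
  also have "(\<Sum>j\<in>UNIV-{a}. f j * g j) = (\<Sum>j\<in>UNIV. f j * g j) - f a * g a"
    by (simp add: sum.remove[of UNIV a])
  finally show ?thesis by (simp add: algebra_simps)
qed

lemma sum_delta_mult:
  fixes f :: "'n::finite \<Rightarrow> real"
  shows "(\<Sum>k\<in>UNIV. (if i = k then 1 else 0) * f k) = f i"
proof -
  have "(\<Sum>k\<in>UNIV. (if i = k then 1 else 0) * f k) = (\<Sum>k\<in>UNIV. if i = k then f k else 0)"
    by (rule sum.cong) auto
  then show ?thesis by simp
qed

lemma sum_delta_mult2:
  fixes f :: "'n::finite \<Rightarrow> real"
  shows "(\<Sum>k\<in>UNIV. f k * (if k = i then 1 else 0)) = f i"
proof -
  have "(\<Sum>k\<in>UNIV. f k * (if k = i then 1 else 0)) = (\<Sum>k\<in>UNIV. if k = i then f k else 0)"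
    by (rule sum.cong) auto
  then show ?thesis by simp
qed

definition signs :: "('n \<Rightarrow> real) set" where
  "signs = {d. \<forall>i. d i = 1 \<or> d i = -1}"

lemma finite_signs: "finite (signs :: ('n::finite \<Rightarrow> real) set)"
proof -
  have eq: "signs = PiE UNIV (\<lambda>_::'n. {1, -1::real})"
    by (auto simp: signs_def PiE_UNIV_domain)
  have "finite (PiE UNIV (\<lambda>_::'n. {1, -1::real}))" by (intro finite_PiE) auto
  then show ?thesis unfolding eq .
qed

definition good :: "real^'n^'n \<Rightarrow> bool" where
  "good A \<longleftrightarrow> (\<exists>x y :: real^'n. (\<forall>i. x$i \<ge> 0) \<and> (\<Sum>i\<in>UNIV. x$i) = 1 \<and>
      (\<forall>i. y$i \<ge> 0) \<and> (\<Sum>i\<in>UNIV. y$i) = 1 \<and>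
      (\<exists>c>0. A *v x = (\<chi> i. c) \<and> transpose A *v y = (\<chi> i. c)))"

definition smat :: "('n \<Rightarrow> real) \<Rightarrow> ('n \<Rightarrow> real) \<Rightarrow> real^'n^'n \<Rightarrow> real^'n^'n" where
  "smat d1 d2 B = (\<chi> i j. d1 i * d2 j * B$i$j)"

lemma signs_sq: "d \<in> signs \<Longrightarrow> d i * d i = 1"
  unfolding signs_def by (metis (mono_tags) mem_Collect_eq mult_1 mult_minus1 minus_minus)

lemma exists_signs:
  fixes B :: "real^'n::finite^'n"
  assumes "invertible B"
  shows "\<exists>e1\<in>signs. \<exists>e2\<in>signs. good (smat e1 e2 B)"
proof -
  obtain M where BM: "B ** M = mat 1" and MB: "M ** B = mat 1"
    using assms unfolding invertible_def by blast
  have BM': "(\<Sum>j\<in>UNIV. B$i$j * M$j$k) = (if i = k then 1 else 0)" for i k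
    using arg_cong[OF BM, of "\<lambda>A. A$i$k"] by (simp add: matrix_matrix_mult_def mat_def)
  have MB': "(\<Sum>j\<in>UNIV. M$i$j * B$j$k) = (if i = k then 1 else 0)" for i k
    using arg_cong[OF MB, of "\<lambda>A. A$i$k"] by (simp add: matrix_matrix_mult_def mat_def)
  define w where "w d1 j = (\<Sum>k\<in>UNIV. M$j$k * d1 k)" for d1 :: "'n \<Rightarrow> real" and j
  define u where "u d2 k = (\<Sum>j\<in>UNIV. d2 j * M$j$k)" for d2 :: "'n \<Rightarrow> real" and k
  define V where "V p = (\<Sum>j\<in>UNIV. snd p j * w (fst p) j)" for p
  have V2: "V (d1, d2) = (\<Sum>k\<in>UNIV. d1 k * u d2 k)" for d1 d2
  proof -
    have "V (d1, d2) = (\<Sum>j\<in>UNIV. \<Sum>k\<in>UNIV. d2 j * M$j$k * d1 k)"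
      unfolding V_def w_def by (simp add: sum_distrib_left mult.assoc)
    also have "\<dots> = (\<Sum>k\<in>UNIV. \<Sum>j\<in>UNIV. d2 j * M$j$k * d1 k)"
      by (rule sum.swap)
    also have "\<dots> = (\<Sum>k\<in>UNIV. d1 k * u d2 k)"
      unfolding u_def by (simp add: sum_distrib_left sum_distrib_right mult.commute)
    finally show ?thesis .
  qed
  have fin: "finite (signs \<times> signs :: (('n \<Rightarrow> real) \<times> ('n \<Rightarrow> real)) set)"
    by (intro finite_cartesian_product finite_signs)
  have ne: "signs \<times> signs \<noteq> {}" by (auto simp: signs_def)
  define m where "m = Max (V ` (signs \<times> signs))"
  have "m \<in> V ` (signs \<times> signs)"
    unfolding m_def using fin ne by (intro Max_in) auto
  then obtain e1 e2 where e: "e1 \<in> signs" "e2 \<in> signs" "V (e1, e2) = m"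
    by auto
  have maxV: "V p \<le> m" if "p \<in> signs \<times> signs" for p
    unfolding m_def using fin that by (intro Max_ge) auto
  have xnn: "e2 j * w e1 j \<ge> 0" for j
  proof -
    have "e2(j := - e2 j) \<in> signs" using e(2) by (auto simp: signs_def)
    then have "V (e1, e2(j := - e2 j)) \<le> V (e1, e2)" using maxV e by auto
    then have "(\<Sum>j\<in>UNIV. e2 j * w e1 j) + (- e2 j - e2 j) * w e1 j \<le> (\<Sum>j\<in>UNIV. e2 j * w e1 j)"
      by (simp only: V_def fst_conv snd_conv sum_upd_mult)
    then show ?thesis by (simp add: algebra_simps)
  qed
  have ynn: "e1 k * u e2 k \<ge> 0" for k
  proof -
    have "e1(k := - e1 k) \<in> signs" using e(1) by (auto simp: signs_def)
    then have "V (e1(k := - e1 k), e2) \<le> V (e1, e2)" using maxV e by auto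
    then have "(\<Sum>k\<in>UNIV. e1 k * u e2 k) + (- e1 k - e1 k) * u e2 k \<le> (\<Sum>k\<in>UNIV. e1 k * u e2 k)"
      by (simp only: V2 sum_upd_mult)
    then show ?thesis by (simp add: algebra_simps)
  qed
  let ?M = "smat e1 e2 B"
  define x' where "x' = (\<chi> j. e2 j * w e1 j)"
  define y' where "y' = (\<chi> k. e1 k * u e2 k)"
  have Mx: "?M *v x' = (\<chi> i. 1)"
  proof -
    have "(\<Sum>j\<in>UNIV. e1 i * e2 j * B$i$j * (e2 j * w e1 j)) = 1" for i
    proof -
      have "(\<Sum>j\<in>UNIV. e1 i * e2 j * B$i$j * (e2 j * w e1 j))
          = (\<Sum>j\<in>UNIV. e1 i * (B$i$j * w e1 j))"
        using signs_sq[OF e(2)] by (intro sum.cong) (auto simp: algebra_simps)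
      also have "\<dots> = e1 i * (\<Sum>j\<in>UNIV. \<Sum>k\<in>UNIV. B$i$j * M$j$k * e1 k)"
        unfolding w_def by (simp add: sum_distrib_left mult.assoc)
      also have "\<dots> = e1 i * (\<Sum>k\<in>UNIV. \<Sum>j\<in>UNIV. B$i$j * M$j$k * e1 k)"
        by (subst sum.swap) (rule refl)
      also have "\<dots> = e1 i * (\<Sum>k\<in>UNIV. (\<Sum>j\<in>UNIV. B$i$j * M$j$k) * e1 k)"
        by (simp add: sum_distrib_right)
      also have "\<dots> = e1 i * e1 i" by (simp add: BM' sum_delta_mult)
      also have "\<dots> = 1" using signs_sq[OF e(1)] .
      finally show ?thesis .
    qed
    then show ?thesis
      by (simp add: vec_eq_iff matrix_vector_mult_def smat_def x'_def)
  qed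
  have My: "transpose ?M *v y' = (\<chi> i. 1)"
  proof -
    have "(\<Sum>i\<in>UNIV. e1 i * e2 j * B$i$j * (e1 i * u e2 i)) = 1" for j
    proof -
      have "(\<Sum>i\<in>UNIV. e1 i * e2 j * B$i$j * (e1 i * u e2 i))
          = (\<Sum>i\<in>UNIV. e2 j * (B$i$j * u e2 i))"
        using signs_sq[OF e(1)] by (intro sum.cong) (auto simp: algebra_simps)
      also have "\<dots> = e2 j * (\<Sum>i\<in>UNIV. \<Sum>k\<in>UNIV. e2 k * (M$k$i * B$i$j))"
        unfolding u_def by (simp add: sum_distrib_left sum_distrib_right mult.commute mult.left_commute)
      also have "\<dots> = e2 j * (\<Sum>k\<in>UNIV. \<Sum>i\<in>UNIV. e2 k * (M$k$i * B$i$j))"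
        by (subst sum.swap) (rule refl)
      also have "\<dots> = e2 j * (\<Sum>k\<in>UNIV. e2 k * (\<Sum>i\<in>UNIV. M$k$i * B$i$j))"
        by (simp add: sum_distrib_left)
      also have "\<dots> = e2 j * e2 j" by (simp add: MB' sum_delta_mult2)
      also have "\<dots> = 1" using signs_sq[OF e(2)] .
      finally show ?thesis .
    qed
    then show ?thesis
      by (simp add: vec_eq_iff matrix_vector_mult_def smat_def y'_def transpose_def)
  qed
  have sx: "(\<Sum>i\<in>UNIV. x'$i) = m" using e(3) by (simp add: x'_def V_def)
  have sy: "(\<Sum>i\<in>UNIV. y'$i) = m" using e(3) by (simp add: y'_def V2[symmetric])
  have "m \<ge> 0" using sx xnn by (metis (no_types) sum_nonneg vec_lambda_beta x'_def)
  moreover have "m \<noteq> 0"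
  proof
    assume "m = 0"
    then have "\<forall>i. x'$i = 0" using sx xnn
      by (simp add: sum_nonneg_eq_0_iff x'_def)
    then have "x' = 0" by (simp add: vec_eq_iff)
    then have "?M *v 0 = (\<chi> i. 1)" using Mx by simp
    then show False by (simp add: vec_eq_iff)
  qed
  ultimately have mpos: "m > 0" by simp
  define x where "x = (\<chi> j. x'$j / m)"
  define y where "y = (\<chi> j. y'$j / m)"
  have "good ?M"
    unfolding good_def
  proof (intro exI conjI allI)
    show "x$i \<ge> 0" for i using xnn mpos by (simp add: x_def x'_def)
    show "y$i \<ge> 0" for i using ynn mpos by (simp add: y_def y'_def)
    show "(\<Sum>i\<in>UNIV. x$i) = 1" using sx mpos by (simp add: x_def sum_divide_distrib[symmetric])
    show "(\<Sum>i\<in>UNIV. y$i) = 1" using sy mpos by (simp add: y_def sum_divide_distrib[symmetric])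
    show "1/m > 0" using mpos by simp
    have "?M *v x = (1/m) *s (?M *v x')"
      by (simp add: x_def vec_eq_iff matrix_vector_mult_def sum_distrib_left)
    then show "?M *v x = (\<chi> i. 1/m)" by (simp add: Mx vec_eq_iff)
    have "transpose ?M *v y = (1/m) *s (transpose ?M *v y')"
      by (simp add: y_def vec_eq_iff matrix_vector_mult_def sum_distrib_left)
    then show "transpose ?M *v y = (\<chi> i. 1/m)" using My by (simp add: vec_eq_iff)
  qed
  then show ?thesis using e by blast
qed



definition maff :: "'i set \<Rightarrow> (('i \<Rightarrow> real) \<Rightarrow> real) \<Rightarrow> bool" where
  "maff I f \<longleftrightarrow> (\<forall>k\<in>I. \<forall>x t. f (x(k:=t)) = f (x(k:=0)) + t * (f (x(k:=1)) - f (x(k:=0))))"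

lemma upd_measurable:
  fixes D :: "real measure"
  assumes spD: "space D = UNIV" and j: "j \<notin> I"
  shows "(\<lambda>x. x(j:=c)) \<in> measurable (PiM I (\<lambda>_. D)) (PiM (insert j I) (\<lambda>_. D))"
proof -
  have "(\<lambda>\<omega> i. if i = j then c else \<omega> i) \<in> measurable (PiM I (\<lambda>_. D)) (PiM (insert j I) (\<lambda>_. D))"
  proof (rule measurable_PiM_single')
    fix i assume "i \<in> insert j I"
    then show "(\<lambda>\<omega>. if i = j then c else \<omega> i) \<in> measurable (PiM I (\<lambda>_. D)) D"
      by (cases "i = j") (auto simp: spD)
  next
    show "(\<lambda>\<omega> i. if i = j then c else \<omega> i) \<in> space (PiM I (\<lambda>_. D)) \<rightarrow> (\<Pi>\<^sub>E i\<in>insert j I. space D)"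
      using j by (auto simp: space_PiM PiE_def extensional_def spD)
  qed
  then show ?thesis by (simp add: fun_upd_def)
qed

lemma null_maff:
  fixes D :: "real measure"
  assumes D: "prob_space D" "sets D = sets borel" and at: "\<And>y. emeasure D {y} = 0"
    and fin: "finite I"
  shows "\<And>f. f \<in> borel_measurable (PiM I (\<lambda>_. D)) \<Longrightarrow> maff I f \<Longrightarrow>
     (\<exists>x\<in>space (PiM I (\<lambda>_. D)). f x \<noteq> 0) \<Longrightarrow>
     emeasure (PiM I (\<lambda>_. D)) {x\<in>space (PiM I (\<lambda>_. D)). f x = 0} = 0"
  using fin
proof (induction I rule: finite_induct)
  case (empty f)
  then obtain x where x: "x \<in> space (PiM {} (\<lambda>_. D))" "f x \<noteq> 0" by auto
  have sp: "space (PiM {} (\<lambda>_. D)) = {\<lambda>k. undefined}" by (rule space_PiM_empty)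
  have e: "{x\<in>space (PiM {} (\<lambda>_. D)). f x = 0} = {}" using x unfolding sp by auto
  show ?case unfolding e by simp
next
  case (insert j I f)
  let ?M = "PiM I (\<lambda>_. D)" and ?N = "PiM (insert j I) (\<lambda>_. D)"
  have spD: "space D = UNIV" using sets_eq_imp_space_eq[OF D(2)] by simp
  interpret PS: product_sigma_finite "\<lambda>_. D"
    unfolding product_sigma_finite_def using prob_space_imp_sigma_finite[OF D(1)] by simp
  have fm[measurable]: "f \<in> borel_measurable ?N" by fact
  have mf: "maff (insert j I) f" by fact
  define a where "a x = f (x(j:=1)) - f (x(j:=0))" for x
  define b where "b x = f (x(j:=0))" for x
  have fab: "f (x(j:=y)) = b x + y * a x" for x y
  proof -
    have "f (x(j:=y)) = f (x(j:=0)) + y * (f (x(j:=1)) - f (x(j:=0)))"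
      using mf unfolding maff_def by blast
    then show ?thesis unfolding a_def b_def .
  qed
  have um: "(\<lambda>x. x(j:=c)) \<in> measurable ?M ?N" for c
    by (rule upd_measurable[OF spD insert.hyps(2)])
  have am[measurable]: "a \<in> borel_measurable ?M"
    unfolding a_def using measurable_comp[OF um fm] by (intro borel_measurable_diff) (auto simp: o_def)
  have bm[measurable]: "b \<in> borel_measurable ?M"
    unfolding b_def using measurable_comp[OF um fm] by (auto simp: o_def)
  have Fk: "f (x(k:=t, j:=c)) = f (x(k:=0, j:=c)) + t * (f (x(k:=1, j:=c)) - f (x(k:=0, j:=c)))"
    if k: "k \<in> I" for k x t c
  proof -
    have kj: "k \<noteq> j" using k insert.hyps(2) by auto
    have "f ((x(j:=c))(k:=t)) = f ((x(j:=c))(k:=0)) + t * (f ((x(j:=c))(k:=1)) - f ((x(j:=c))(k:=0)))"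
      using mf k unfolding maff_def by blast
    then show ?thesis using kj by (simp add: fun_upd_twist[of j k])
  qed
  have ma: "maff I a" unfolding maff_def
  proof (intro ballI allI)
    fix k x t assume k: "k \<in> I"
    show "a (x(k := t)) = a (x(k := 0)) + t * (a (x(k := 1)) - a (x(k := 0)))"
      unfolding a_def
      by (simp only: Fk[OF k, of x t 1] Fk[OF k, of x t 0]) (simp add: algebra_simps)
  qed
  have mb: "maff I b" unfolding maff_def
  proof (intro ballI allI)
    fix k x t assume k: "k \<in> I"
    show "b (x(k := t)) = b (x(k := 0)) + t * (b (x(k := 1)) - b (x(k := 0)))"
      unfolding b_def by (rule Fk[OF k])
  qed
  obtain x0 where x0: "x0 \<in> space ?N" "f x0 \<noteq> 0" using insert.prems(3) by auto
  define x' where "x' = x0(j:=undefined)"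
  have x'sp: "x' \<in> space ?M" using x0(1) insert.hyps(2)
    by (auto simp: x'_def space_PiM PiE_def extensional_def spD)
  have "x'(j := x0 j) = x0" by (simp add: x'_def)
  then have "f x0 = b x' + x0 j * a x'" using fab[of x' "x0 j"] by simp
  then have abnz: "a x' \<noteq> 0 \<or> b x' \<noteq> 0" using x0(2) by auto
  define S where "S = {x\<in>space ?N. f x = 0}"
  define Z where "Z = {x\<in>space ?M. a x = 0 \<and> b x = 0}"
  have S[measurable]: "S \<in> sets ?N" unfolding S_def by measurable
  have Zs[measurable]: "Z \<in> sets ?M" unfolding Z_def by measurable
  have inner: "(\<integral>\<^sup>+ y. indicator S (x(j := y)) \<partial>D) = indicator Z x" if x: "x \<in> space ?M" for x
  proof -
    have xy: "x(j:=y) \<in> space ?N" for y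
      using x by (auto simp: space_PiM PiE_def extensional_def spD)
    have ind: "indicator S (x(j := y)) = (indicator {y. b x + y * a x = 0} y :: ennreal)" for y
      using xy[of y] by (simp add: S_def fab indicator_def)
    show ?thesis
    proof (cases "a x = 0")
      case True
      then have "(\<integral>\<^sup>+ y. indicator S (x(j := y)) \<partial>D) = (\<integral>\<^sup>+ y. indicator Z x \<partial>D)"
        using x by (intro nn_integral_cong) (simp only: ind, simp add: Z_def indicator_def)
      also have "\<dots> = indicator Z x"
        using prob_space.emeasure_space_1[OF D(1)] by (simp add: nn_integral_const)
      finally show ?thesis .
    next
      case False
      then have "(\<integral>\<^sup>+ y. indicator S (x(j := y)) \<partial>D) = (\<integral>\<^sup>+ y. indicator {- b x / a x} y \<partial>D)"
        by (intro nn_integral_cong) (simp only: ind, auto simp: indicator_def field_simps)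
      also have "\<dots> = emeasure D {- b x / a x}"
        using D(2) by (intro nn_integral_indicator) simp
      also have "\<dots> = 0" by (rule at)
      also have "0 = indicator Z x" using False by (simp add: Z_def indicator_def)
      finally show ?thesis .
    qed
  qed
  have "emeasure ?N S = (\<integral>\<^sup>+ x. indicator S x \<partial>?N)"
    by (simp add: nn_integral_indicator)
  also have "\<dots> = (\<integral>\<^sup>+ x. (\<integral>\<^sup>+ y. indicator S (x(j := y)) \<partial>D) \<partial>?M)"
    by (rule PS.product_nn_integral_insert[OF insert.hyps]) measurable
  also have "\<dots> = (\<integral>\<^sup>+ x. indicator Z x \<partial>?M)"
    by (intro nn_integral_cong inner)
  also have "\<dots> = emeasure ?M Z" by (simp add: nn_integral_indicator)
  also have "\<dots> = 0"
  proof (cases "\<exists>x\<in>space ?M. a x \<noteq> 0")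
    case True
    then have h0: "emeasure ?M {x\<in>space ?M. a x = 0} = 0" using insert.IH[OF am ma] by blast
    have sub: "Z \<subseteq> {x\<in>space ?M. a x = 0}" by (auto simp: Z_def)
    have ms: "{x\<in>space ?M. a x = 0} \<in> sets ?M" by measurable
    have "emeasure ?M Z \<le> emeasure ?M {x\<in>space ?M. a x = 0}" by (rule emeasure_mono[OF sub ms])
    then show ?thesis using h0 by simp
  next
    case False
    then have "b x' \<noteq> 0" using abnz x'sp by auto
    then have h0: "emeasure ?M {x\<in>space ?M. b x = 0} = 0" using insert.IH[OF bm mb] x'sp by blast
    have sub: "Z \<subseteq> {x\<in>space ?M. b x = 0}" by (auto simp: Z_def)
    have ms: "{x\<in>space ?M. b x = 0} \<in> sets ?M" by measurable
    have "emeasure ?M Z \<le> emeasure ?M {x\<in>space ?M. b x = 0}" by (rule emeasure_mono[OF sub ms])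
    then show ?thesis using h0 by simp
  qed
  finally show ?case unfolding S_def .
qed



definition pvecs :: "(real^'n) set" where
  "pvecs = {x. (\<forall>i. x$i \<ge> 0) \<and> (\<Sum>i\<in>UNIV. x$i) = 1}"

lemma compact_pvecs: "compact (pvecs :: (real^'n::finite) set)"
proof (rule compact_eq_bounded_closed[THEN iffD2], intro conjI)
  show "bounded (pvecs :: (real^'n) set)"
    unfolding bounded_iff
  proof (intro exI ballI)
    fix x :: "real^'n" assume "x \<in> pvecs"
    then have "(\<Sum>i\<in>UNIV. \<bar>x$i\<bar>) = 1" by (simp add: pvecs_def)
    then show "norm x \<le> 1" using norm_le_l1_cart[of x] by simp
  qed
  have eq: "pvecs = (\<Inter>i. {x::real^'n. x$i \<ge> 0}) \<inter> {x. (\<Sum>i\<in>UNIV. x$i) = 1}"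
    by (auto simp: pvecs_def)
  have c1: "closed {x::real^'n. (\<Sum>i\<in>UNIV. x$i) = 1}"
    by (intro closed_Collect_eq continuous_intros)
  have c2: "closed {x::real^'n. x$i \<ge> 0}" for i
    by (intro closed_Collect_le continuous_intros)
  show "closed (pvecs :: (real^'n) set)" unfolding eq
    by (intro closed_Int closed_INT ballI c1 c2)
qed

definition EQk :: "nat \<Rightarrow> (real^'n^'n) set" where
  "EQk k = {A. \<exists>x\<in>pvecs. \<exists>y\<in>pvecs. \<exists>a. a \<ge> 1 + 1 / real (Suc k) \<and>
      A *v x = (\<chi> i. a) \<and> transpose A *v y = (\<chi> i. a)}"

lemma mv_tendsto:
  fixes A :: "nat \<Rightarrow> real^'n::finite^'n"
  assumes "A \<longlonglongrightarrow> L" "x \<longlonglongrightarrow> x0"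
  shows "(\<lambda>n. (A n *v x n) $ i) \<longlonglongrightarrow> (L *v x0) $ i"
    and "(\<lambda>n. (transpose (A n) *v x n) $ i) \<longlonglongrightarrow> (transpose L *v x0) $ i"
  unfolding matrix_vector_mult_def transpose_def using assms
  by (auto intro!: tendsto_intros)

lemma closed_EQk: "closed (EQk k :: (real^'n::finite^'n) set)"
  unfolding closed_sequential_limits
proof (intro allI impI, elim conjE)
  fix A :: "nat \<Rightarrow> real^'n^'n" and L
  assume AS: "\<forall>n. A n \<in> EQk k" and lim: "A \<longlonglongrightarrow> L"
  have "\<forall>n. \<exists>t. fst t \<in> pvecs \<and> fst (snd t) \<in> pvecs \<and> snd (snd t) \<ge> 1 + 1 / real (Suc k) \<and>
     A n *v fst t = (\<chi> i. snd (snd t)) \<and> transpose (A n) *v fst (snd t) = (\<chi> i. snd (snd t))"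
  proof
    fix n
    from AS obtain x y a where "x \<in> pvecs" "y \<in> pvecs" "a \<ge> 1 + 1 / real (Suc k)"
      "A n *v x = (\<chi> i. a)" "transpose (A n) *v y = (\<chi> i. a)"
      unfolding EQk_def by blast
    then show "\<exists>t. fst t \<in> pvecs \<and> fst (snd t) \<in> pvecs \<and> snd (snd t) \<ge> 1 + 1 / real (Suc k) \<and>
     A n *v fst t = (\<chi> i. snd (snd t)) \<and> transpose (A n) *v fst (snd t) = (\<chi> i. snd (snd t))"
      by (intro exI[of _ "(x, y, a)"]) simp
  qed
  then obtain F where F: "\<forall>n. fst (F n) \<in> pvecs \<and> fst (snd (F n)) \<in> pvecs \<and> snd (snd (F n)) \<ge> 1 + 1 / real (Suc k) \<and>
     A n *v fst (F n) = (\<chi> i. snd (snd (F n))) \<and> transpose (A n) *v fst (snd (F n)) = (\<chi> i. snd (snd (F n)))"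
    by (rule choice[THEN exE]) 
  define x where "x n = fst (F n)" for n
  define y where "y n = fst (snd (F n))" for n
  define a where "a n = snd (snd (F n))" for n
  have W: "\<And>n. x n \<in> pvecs" "\<And>n. y n \<in> pvecs" "\<And>n. a n \<ge> 1 + 1 / real (Suc k)"
     "\<And>n. A n *v x n = (\<chi> i. a n)" "\<And>n. transpose (A n) *v y n = (\<chi> i. a n)"
    using F by (auto simp: x_def y_def a_def)
  have sc: "seq_compact (pvecs \<times> pvecs :: ((real^'n) \<times> (real^'n)) set)"
    by (intro compact_imp_seq_compact compact_Times compact_pvecs)
  have "\<forall>n. (x n, y n) \<in> pvecs \<times> pvecs" using W by auto
  from sc this obtain p r where p: "p \<in> pvecs \<times> pvecs" "strict_mono r"
      "((\<lambda>n. (x n, y n)) \<circ> r) \<longlonglongrightarrow> p"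
    by (rule seq_compactE)
  obtain x0 y0 where p0: "p = (x0, y0)" by (cases p)
  have lx: "(\<lambda>n. x (r n)) \<longlonglongrightarrow> x0" using tendsto_fst[OF p(3)] p0 by (simp add: o_def)
  have ly: "(\<lambda>n. y (r n)) \<longlonglongrightarrow> y0" using tendsto_snd[OF p(3)] p0 by (simp add: o_def)
  have lA: "(\<lambda>n. A (r n)) \<longlonglongrightarrow> L" using LIMSEQ_subseq_LIMSEQ[OF lim p(2)] by (simp add: o_def)
  have c1: "(\<lambda>n. a (r n)) \<longlonglongrightarrow> (L *v x0) $ i" for i
    using mv_tendsto(1)[OF lA lx, of i] W(4) by simp
  have c2: "(\<lambda>n. a (r n)) \<longlonglongrightarrow> (transpose L *v y0) $ i" for i
    using mv_tendsto(2)[OF lA ly, of i] W(5) by simp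
  obtain i0 :: 'n where True by simp
  define a0 where "a0 = (L *v x0) $ i0"
  have e1: "(L *v x0) $ i = a0" for i
    using LIMSEQ_unique[OF c1[of i] c1[of i0]] a0_def by simp
  have e2: "(transpose L *v y0) $ i = a0" for i
    using LIMSEQ_unique[OF c2[of i] c1[of i0]] a0_def by simp
  have "a0 \<ge> 1 + 1 / real (Suc k)"
    using c1[of i0] W(3) unfolding a0_def by (intro LIMSEQ_le_const) auto
  moreover have "L *v x0 = (\<chi> i. a0)" using e1 by (simp add: vec_eq_iff)
  moreover have "transpose L *v y0 = (\<chi> i. a0)" using e2 by (simp add: vec_eq_iff)
  moreover have "x0 \<in> pvecs" "y0 \<in> pvecs" using p(1) p0 by auto
  ultimately show "L \<in> EQk k" unfolding EQk_def by blast
qed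

lemma EQ_Union: "{A :: real^'n::finite^'n. equilibrium A} = (\<Union>k. EQk k)"
proof (intro set_eqI iffI)
  fix A :: "real^'n^'n"
  assume "A \<in> {A. equilibrium A}"
  then obtain a x y where H: "a > 1" "x \<in> pvecs" "y \<in> pvecs" "A *v x = (\<chi> i. a)"
      "transpose A *v y = (\<chi> i. a)"
    unfolding equilibrium_def pvecs_def by auto
  obtain k where "inverse (real (Suc k)) < a - 1" using reals_Archimedean[of "a - 1"] H(1) by auto
  then have "a \<ge> 1 + 1 / real (Suc k)" by (simp add: field_simps)
  then have "A \<in> EQk k" unfolding EQk_def using H by blast
  then show "A \<in> (\<Union>k. EQk k)" by blast
next
  fix A :: "real^'n^'n"
  assume "A \<in> (\<Union>k. EQk k)"
  then obtain k x y a where H: "x \<in> pvecs" "y \<in> pvecs" "a \<ge> 1 + 1 / real (Suc k)"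
     "A *v x = (\<chi> i. a)" "transpose A *v y = (\<chi> i. a)"
    unfolding EQk_def by blast
  have "1 / real (Suc k) > 0" by simp
  then have "a > 1" using H(3) by linarith
  then show "A \<in> {A. equilibrium A}" using H unfolding equilibrium_def pvecs_def by auto
qed

lemma EQ_borel: "{A :: real^'n::finite^'n. equilibrium A} \<in> sets borel"
proof -
  have "\<And>k. EQk k \<in> sets (borel :: (real^'n^'n) measure)" by (intro borel_closed closed_EQk)
  then show ?thesis unfolding EQ_Union by auto
qed

lemma perturbed_measurable:
  fixes D :: "real measure"
  assumes "sets D = sets borel"
  shows "(perturbed_ones s :: ('n::finite \<times> 'n \<Rightarrow> real) \<Rightarrow> real^'n^'n)
          \<in> measurable (PiM UNIV (\<lambda>_. D)) borel"
proof -
  have "continuous_on UNIV (perturbed_ones s :: ('n \<times> 'n \<Rightarrow> real) \<Rightarrow> real^'n^'n)"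
    unfolding perturbed_ones_def
    by (intro continuous_intros continuous_on_product_coordinates)
  then have "(perturbed_ones s :: ('n \<times> 'n \<Rightarrow> real) \<Rightarrow> real^'n^'n) \<in> borel_measurable borel"
    by (rule borel_measurable_continuous_onI)
  moreover have "sets (PiM (UNIV :: ('n \<times> 'n) set) (\<lambda>_. D)) = sets (PiM UNIV (\<lambda>_. borel))"
    using assms by (intro sets_PiM_cong) auto
  ultimately show ?thesis
    by (metis measurable_cong_sets sets_PiM_equal_borel)
qed

lemma E_sets:
  fixes D :: "real measure"
  assumes "sets D = sets borel"
  shows "{B \<in> space (PiM (UNIV :: ('n::finite \<times> 'n) set) (\<lambda>_. D)).
              equilibrium (perturbed_ones s B :: real^'n^'n)} \<in> sets (PiM UNIV (\<lambda>_. D))"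
proof -
  have "{B \<in> space (PiM (UNIV :: ('n \<times> 'n) set) (\<lambda>_. D)). equilibrium (perturbed_ones s B :: real^'n^'n)}
     = (perturbed_ones s) -` {A. equilibrium A} \<inter> space (PiM UNIV (\<lambda>_. D))" by auto
  also have "\<dots> \<in> sets (PiM UNIV (\<lambda>_. D))"
    by (rule measurable_sets[OF perturbed_measurable[OF assms] EQ_borel])
  finally show ?thesis .
qed




definition detf :: "('n::finite \<times> 'n \<Rightarrow> real) \<Rightarrow> real" where
  "detf B = (\<Sum>p\<in>{p. p permutes (UNIV::'n set)}. of_int (sign p) * (\<Prod>i\<in>UNIV. B (i, p i)))"

definition matB :: "('n \<times> 'n \<Rightarrow> real) \<Rightarrow> real^'n^'n" where
  "matB B = (\<chi> i j. B (i, j))"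

lemma detf_det: "detf B = det (matB B)"
  by (simp add: detf_def det_def matB_def)

lemma prod_affine:
  fixes x :: "'n::finite \<times> 'n \<Rightarrow> real" and p :: "'n \<Rightarrow> 'n"
  shows "(\<Prod>i\<in>UNIV. (x(k:=t)) (i, p i)) = (\<Prod>i\<in>UNIV. (x(k:=0)) (i, p i))
     + t * ((\<Prod>i\<in>UNIV. (x(k:=1)) (i, p i)) - (\<Prod>i\<in>UNIV. (x(k:=0)) (i, p i)))"
proof -
  obtain i0 j0 where k: "k = (i0, j0)" by (cases k)
  have gen: "(\<Prod>i\<in>UNIV. (x(k:=c)) (i, p i)) =
      (if p i0 = j0 then c else x (i0, p i0)) * (\<Prod>i\<in>UNIV-{i0}. x (i, p i))" for c
  proof -
    have "(\<Prod>i\<in>UNIV. (x(k:=c)) (i, p i)) = (x(k:=c)) (i0, p i0) * (\<Prod>i\<in>UNIV-{i0}. (x(k:=c)) (i, p i))"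
      by (simp add: prod.remove[of UNIV i0])
    also have "(\<Prod>i\<in>UNIV-{i0}. (x(k:=c)) (i, p i)) = (\<Prod>i\<in>UNIV-{i0}. x (i, p i))"
      by (rule prod.cong) (auto simp: k)
    finally show ?thesis by (simp add: k)
  qed
  show ?thesis unfolding gen by (cases "p i0 = j0") (simp_all add: algebra_simps)
qed

lemma sum_aff:
  fixes f g :: "'a \<Rightarrow> real"
  shows "(\<Sum>p\<in>A. f p + t * (g p - f p)) = (\<Sum>p\<in>A. f p) + t * ((\<Sum>p\<in>A. g p) - (\<Sum>p\<in>A. f p))"
  by (simp add: sum.distrib sum_subtractf flip: sum_distrib_left)

lemma maff_detf: "maff UNIV (detf :: ('n::finite \<times> 'n \<Rightarrow> real) \<Rightarrow> real)"
  unfolding maff_def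
proof (intro ballI allI)
  fix k :: "'n \<times> 'n" and x :: "'n \<times> 'n \<Rightarrow> real" and t :: real
  let ?T = "\<lambda>c p. of_int (sign p) * (\<Prod>i\<in>UNIV. (x(k:=c)) (i, p i))"
  have "detf (x(k:=t)) = (\<Sum>p\<in>{p. p permutes (UNIV::'n set)}. ?T t p)" by (simp add: detf_def)
  also have "\<dots> = (\<Sum>p\<in>{p. p permutes (UNIV::'n set)}. ?T 0 p + t * (?T 1 p - ?T 0 p))"
    by (intro sum.cong refl) (simp only: prod_affine[of x k t], simp add: algebra_simps)
  also have "\<dots> = (\<Sum>p\<in>{p. p permutes (UNIV::'n set)}. ?T 0 p) +
      t * ((\<Sum>p\<in>{p. p permutes (UNIV::'n set)}. ?T 1 p) - (\<Sum>p\<in>{p. p permutes (UNIV::'n set)}. ?T 0 p))"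
    by (rule sum_aff)
  finally show "detf (x(k:=t)) = detf (x(k:=0)) + t * (detf (x(k:=1)) - detf (x(k:=0)))"
    by (simp add: detf_def)
qed

lemma comp_meas:
  fixes D :: "real measure"
  assumes "sets D = sets borel"
  shows "(\<lambda>B. B k) \<in> borel_measurable (PiM UNIV (\<lambda>_::'i. D))"
proof -
  have "(\<lambda>B. B k) \<in> measurable (PiM UNIV (\<lambda>_::'i. D)) D"
    by (rule measurable_component_singleton) simp
  then show ?thesis using measurable_cong_sets[OF refl assms] by blast
qed

lemma detf_meas:
  fixes D :: "real measure"
  assumes "sets D = sets borel"
  shows "(detf :: ('n::finite \<times> 'n \<Rightarrow> real) \<Rightarrow> real) \<in> borel_measurable (PiM UNIV (\<lambda>_. D))"
  unfolding detf_def
  by (intro borel_measurable_sum borel_measurable_times borel_measurable_prod borel_measurable_const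
      comp_meas[OF assms])

lemma sign_invariant:
  fixes D :: "real measure" and c :: "'i::finite \<Rightarrow> real"
  assumes D: "prob_space D" "sets D = sets borel" "distr D borel uminus = D"
    and c: "\<And>k. c k = 1 \<or> c k = -1"
  shows "distr (PiM UNIV (\<lambda>_. D)) (PiM UNIV (\<lambda>_. D)) (\<lambda>B k. c k * B k) = PiM UNIV (\<lambda>_. D)"
proof -
  let ?P = "PiM (UNIV::'i set) (\<lambda>_. D)"
  have spD: "space D = UNIV" using sets_eq_imp_space_eq[OF D(2)] by simp
  interpret PS: product_sigma_finite "\<lambda>_. D"
    unfolding product_sigma_finite_def using prob_space_imp_sigma_finite[OF D(1)] by simp
  have mulm: "(\<lambda>t. a * t) \<in> measurable D D" for a
    by (subst measurable_cong_sets[OF D(2) D(2)]) simp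
  have gm: "(\<lambda>B k. c k * B k) \<in> measurable ?P ?P"
  proof (rule measurable_PiM_single')
    fix k :: 'i
    have "(\<lambda>B. B k) \<in> measurable ?P D" by (rule measurable_component_singleton) simp
    from measurable_comp[OF this mulm[of "c k"]] show "(\<lambda>B. c k * B k) \<in> measurable ?P D"
      by (simp add: o_def)
  qed (auto simp: space_PiM spD)
  have inv1: "emeasure D ((\<lambda>t. a * t) -` A) = emeasure D A" if A: "A \<in> sets D" and a: "a = 1 \<or> a = -1" for A a
  proof (cases "a = 1")
    case True then show ?thesis by simp
  next
    case False
    then have a': "a = -1" using a by simp
    have um: "uminus \<in> measurable D borel"
      by (subst measurable_cong_sets[OF D(2) refl]) simp
    have "emeasure D A = emeasure (distr D borel uminus) A" using D(3) by simp
    also have "\<dots> = emeasure D (uminus -` A \<inter> space D)"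
      using A D(2) by (intro emeasure_distr um) simp
    also have "uminus -` A \<inter> space D = (\<lambda>t. a * t) -` A" using a' spD by auto
    finally show ?thesis by simp
  qed
  show ?thesis
  proof (rule PS.PiM_eqI)
    show "sets (distr ?P ?P (\<lambda>B k. c k * B k)) = sets ?P" by simp
  next
    fix A :: "'i \<Rightarrow> real set"
    assume A: "\<And>i. i \<in> UNIV \<Longrightarrow> A i \<in> sets D"
    have pre: "(\<lambda>B k. c k * B k) -` PiE UNIV A \<inter> space ?P = PiE UNIV (\<lambda>k. (\<lambda>t. c k * t) -` A k)"
      by (auto simp: space_PiM spD PiE_UNIV_domain)
    have As: "(\<lambda>t. c k * t) -` A k \<in> sets D" for k
      using measurable_sets[OF mulm A[of k]] spD by simp
    have "emeasure (distr ?P ?P (\<lambda>B k. c k * B k)) (PiE UNIV A) = emeasure ?P (PiE UNIV (\<lambda>k. (\<lambda>t. c k * t) -` A k))"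
      using A by (subst emeasure_distr[OF gm]) (auto simp: pre intro: sets_PiM_I_finite)
    also have "\<dots> = (\<Prod>k\<in>UNIV. emeasure D ((\<lambda>t. c k * t) -` A k))"
      using As by (intro PS.emeasure_PiM) auto
    also have "\<dots> = (\<Prod>k\<in>UNIV. emeasure D (A k))"
      using inv1 A c by (intro prod.cong) auto
    finally show "emeasure (distr ?P ?P (\<lambda>B k. c k * B k)) (PiE UNIV A) = (\<Prod>k\<in>UNIV. emeasure D (A k))" .
  qed simp
qed



lemma sign_meas:
  fixes D :: "real measure" and c :: "'i::finite \<Rightarrow> real"
  assumes D: "sets D = sets borel"
  shows "(\<lambda>B k. c k * B k) \<in> measurable (PiM UNIV (\<lambda>_. D)) (PiM UNIV (\<lambda>_. D))"
proof -
  let ?P = "PiM (UNIV::'i set) (\<lambda>_. D)"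
  have spD: "space D = UNIV" using sets_eq_imp_space_eq[OF D] by simp
  have mulm: "(\<lambda>t. a * t) \<in> measurable D D" for a
    by (subst measurable_cong_sets[OF D D]) simp
  show ?thesis
  proof (rule measurable_PiM_single')
    fix k :: 'i
    have "(\<lambda>B. B k) \<in> measurable ?P D" by (rule measurable_component_singleton) simp
    from measurable_comp[OF this mulm[of "c k"]] show "(\<lambda>B. c k * B k) \<in> measurable ?P D"
      by (simp add: o_def)
  qed (auto simp: space_PiM spD)
qed

lemma good_equil:
  fixes B :: "'n::finite \<times> 'n \<Rightarrow> real"
  assumes "good (matB B)" "s > 0"
  shows "equilibrium (perturbed_ones s B :: real^'n^'n)"
proof -
  obtain x y :: "real^'n" and c where H: "\<forall>i. x$i \<ge> 0" "(\<Sum>i\<in>UNIV. x$i) = 1"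
    "\<forall>i. y$i \<ge> 0" "(\<Sum>i\<in>UNIV. y$i) = 1" "c > 0"
    "matB B *v x = (\<chi> i. c)" "transpose (matB B) *v y = (\<chi> i. c)"
    using assms(1) unfolding good_def by blast
  have Mx: "(\<Sum>j\<in>UNIV. B (i, j) * x$j) = c" for i
    using arg_cong[OF H(6), of "\<lambda>v. v$i"] by (simp add: matrix_vector_mult_def matB_def)
  have tr: "transpose A *v v = (\<chi> j. \<Sum>i\<in>UNIV. A$i$j * v$i)" for A :: "real^'n^'n" and v
    unfolding matrix_vector_mult_def transpose_def by (simp add: vec_eq_iff)
  have My: "(\<Sum>i\<in>UNIV. B (i, j) * y$i) = c" for j
    using arg_cong[OF H(7), of "\<lambda>v. v$j"] unfolding tr by (simp add: matB_def)
  have "perturbed_ones s B *v x = (\<chi> i. 1 + s * c)"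
  proof -
    have "(\<Sum>j\<in>UNIV. (1 + s * B (i, j)) * x$j) = 1 + s * c" for i
    proof -
      have "(\<Sum>j\<in>UNIV. (1 + s * B (i, j)) * x$j) = (\<Sum>j\<in>UNIV. x$j) + s * (\<Sum>j\<in>UNIV. B (i, j) * x$j)"
        by (simp add: algebra_simps sum.distrib sum_distrib_left)
      then show ?thesis using H(2) Mx by simp
    qed
    then show ?thesis by (simp add: vec_eq_iff matrix_vector_mult_def perturbed_ones_def)
  qed
  moreover have "transpose (perturbed_ones s B) *v y = (\<chi> i. 1 + s * c)"
  proof -
    have "(\<Sum>i\<in>UNIV. (1 + s * B (i, j)) * y$i) = 1 + s * c" for j
    proof -
      have "(\<Sum>i\<in>UNIV. (1 + s * B (i, j)) * y$i) = (\<Sum>i\<in>UNIV. y$i) + s * (\<Sum>i\<in>UNIV. B (i, j) * y$i)"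
        by (simp add: algebra_simps sum.distrib sum_distrib_left)
      then show ?thesis using H(4) My by simp
    qed
    then show ?thesis unfolding tr by (simp add: vec_eq_iff perturbed_ones_def)
  qed
  moreover have "1 + s * c > 1" using assms(2) H(5) by simp
  ultimately show ?thesis unfolding equilibrium_def using H(1-4) by blast
qed

lemma card_signs: "card (signs :: ('n::finite \<Rightarrow> real) set) = 2 ^ CARD('n)"
proof -
  have eq: "signs = PiE UNIV (\<lambda>_::'n. {1, -1::real})"
    by (auto simp: signs_def PiE_UNIV_domain)
  have "card (PiE UNIV (\<lambda>_::'n. {1, -1::real})) = 2 ^ CARD('n)"
    by (subst card_PiE) (simp_all add: numeral_2_eq_2)
  then show ?thesis unfolding eq .
qed

lemma card_signs1: "card {d \<in> (signs :: ('n::finite \<Rightarrow> real) set). d i0 = 1} = 2 ^ (CARD('n) - 1)"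
proof -
  have eq: "{d \<in> signs. d i0 = 1} = PiE UNIV (\<lambda>i::'n. if i = i0 then {1} else {1, -1::real})"
    by (auto simp: signs_def PiE_UNIV_domain split: if_splits)
  have "card (PiE UNIV (\<lambda>i::'n. if i = i0 then {1} else {1, -1::real}))
        = (\<Prod>i\<in>UNIV. card (if i = i0 then {1} else {1, -1::real}))"
    by (rule card_PiE) simp
  also have "\<dots> = (\<Prod>i\<in>UNIV. if i = i0 then 1 else (2::nat))"
    by (intro prod.cong) auto
  also have "\<dots> = (\<Prod>i\<in>UNIV-{i0}. (2::nat))"
    by (simp add: prod.remove[of UNIV i0])
  also have "\<dots> = 2 ^ (CARD('n) - 1)" by simp
  finally show ?thesis unfolding eq .
qed

theorem theorem7:
  fixes D :: "real measure" and s :: real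
  assumes "prob_space D"
    and "sets D = sets borel"
    and "absolutely_continuous lborel D"
    and "measure D {-1..1} = 1"
    and "distr D borel uminus = D"
    and "s > 0"
  shows "measure (PiM (UNIV :: ('n::finite \<times> 'n) set) (\<lambda>_. D))
           {B \<in> space (PiM (UNIV :: ('n \<times> 'n) set) (\<lambda>_. D)).
              equilibrium (perturbed_ones s B :: real^'n^'n)}
         \<ge> (1/2) ^ (2 * CARD('n) - 1)"
proof -
  let ?P = "PiM (UNIV :: ('n \<times> 'n) set) (\<lambda>_. D)"
  have sD: "sets D = sets borel" by fact
  have spD: "space D = UNIV" using sets_eq_imp_space_eq[OF sD] by simp
  have spP: "space ?P = UNIV" by (simp add: space_PiM spD PiE_UNIV_domain)
  interpret P: prob_space ?P using assms(1) by (intro prob_space_PiM)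
  have at: "emeasure D {y} = 0" for y
  proof -
    have "{y} \<in> null_sets lborel" by (auto simp: null_sets_def)
    then have "{y} \<in> null_sets D" using assms(3) unfolding absolutely_continuous_def by auto
    then show ?thesis by auto
  qed
  define E where "E = {B \<in> space ?P. equilibrium (perturbed_ones s B :: real^'n^'n)}"
  have Es: "E \<in> sets ?P" unfolding E_def by (rule E_sets[OF sD])
  define g where "g t B = (\<lambda>k. fst t (fst k) * snd t (snd k) * B k)"
    for t :: "('n \<Rightarrow> real) \<times> ('n \<Rightarrow> real)" and B :: "'n \<times> 'n \<Rightarrow> real"
  obtain i0 :: 'n where True by simp
  define T where "T = {d\<in>signs. d i0 = 1} \<times> (signs :: ('n \<Rightarrow> real) set)"
  have cT: "fst t (fst k) * snd t (snd k) = 1 \<or> fst t (fst k) * snd t (snd k) = -1" if "t \<in> T" for t k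
  proof -
    have t: "fst t \<in> signs" "snd t \<in> signs" using that by (auto simp: T_def mem_Times_iff)
    have "fst t (fst k) = 1 \<or> fst t (fst k) = -1" "snd t (snd k) = 1 \<or> snd t (snd k) = -1"
      using t unfolding signs_def by auto
    then show ?thesis by (elim disjE) simp_all
  qed
  have gm: "g t \<in> measurable ?P ?P" for t
    unfolding g_def using sign_meas[OF sD, of "\<lambda>k. fst t (fst k) * snd t (snd k)"] by simp
  have gd: "distr ?P ?P (g t) = ?P" if "t \<in> T" for t
    unfolding g_def using sign_invariant[OF assms(1) sD assms(5), of "\<lambda>k. fst t (fst k) * snd t (snd k)"] cT[OF that]
    by simp
  define Et where "Et t = {B \<in> space ?P. equilibrium (perturbed_ones s (g t B) :: real^'n^'n)}" for t
  have Et_eq: "Et t = g t -` E \<inter> space ?P" for t by (auto simp: Et_def E_def spP)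
  have Ets: "Et t \<in> sets ?P" for t unfolding Et_eq by (rule measurable_sets[OF gm Es])
  have mEt: "measure ?P (Et t) = measure ?P E" if "t \<in> T" for t
  proof -
    have "measure ?P E = measure (distr ?P ?P (g t)) E" using gd[OF that] by simp
    also have "\<dots> = measure ?P (g t -` E \<inter> space ?P)" by (rule measure_distr[OF gm Es])
    finally show ?thesis unfolding Et_eq by simp
  qed
  define N where "N = {B\<in>space ?P. detf B = 0}"
  have N0: "emeasure ?P N = 0" unfolding N_def
  proof (rule null_maff[OF assms(1) sD at _ detf_meas[OF sD] maff_detf])
    show "finite (UNIV :: ('n \<times> 'n) set)" by simp
    define e where "e = (\<lambda>k::'n \<times> 'n. if fst k = snd k then 1 else (0::real))"
    have "matB e = mat 1" by (simp add: matB_def e_def mat_def vec_eq_iff)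
    then have "detf e = 1" by (simp add: detf_det)
    then show "\<exists>x\<in>space ?P. detf x \<noteq> 0" using spP by (intro bexI[of _ e]) auto
  qed
  have Ns: "N \<in> sets ?P" unfolding N_def using detf_meas[OF sD] by measurable
  define F where "F = space ?P - N"
  have mF: "measure ?P F = 1"
    unfolding F_def using P.prob_compl[OF Ns] N0 by (simp add: measure_def)
  have cover: "F \<subseteq> (\<Union>t\<in>T. Et t)"
  proof
    fix B assume "B \<in> F"
    then have "detf B \<noteq> 0" by (auto simp: F_def N_def spP)
    then have "invertible (matB B)" by (simp add: detf_det invertible_det_nz)
    then obtain e1 e2 where e: "e1 \<in> signs" "e2 \<in> signs" "good (smat e1 e2 (matB B))"
      using exists_signs by blast
    have matg: "matB (g (d1, d2) B) = smat d1 d2 (matB B)" for d1 d2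
      by (simp add: matB_def smat_def g_def)
    show "B \<in> (\<Union>t\<in>T. Et t)"
    proof (cases "e1 i0 = 1")
      case True
      then have "(e1, e2) \<in> T" using e by (simp add: T_def)
      moreover have "B \<in> Et (e1, e2)"
        using good_equil[of "g (e1, e2) B" s] e(3) assms(6) by (simp add: Et_def spP matg)
      ultimately show ?thesis by blast
    next
      case False
      then have "e1 i0 = -1" using e(1) by (auto simp: signs_def)
      then have "(- e1, - e2) \<in> T" using e(1,2) by (auto simp: T_def signs_def)
      moreover have "smat (- e1) (- e2) (matB B) = smat e1 e2 (matB B)" by (simp add: smat_def)
      then have "B \<in> Et (- e1, - e2)"
        using good_equil[of "g (- e1, - e2) B" s] e(3) assms(6) by (simp add: Et_def spP matg)
      ultimately show ?thesis by blast
    qed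
  qed
  have "finite {d \<in> (signs::('n \<Rightarrow> real) set). d i0 = 1}" by (rule finite_subset[OF _ finite_signs]) auto
  then have fT: "finite T" unfolding T_def using finite_signs by (rule finite_cartesian_product)
  have cardT: "card T = 2 ^ (2 * CARD('n) - 1)"
  proof -
    have "card T = 2 ^ (CARD('n) - 1) * 2 ^ CARD('n)"
      unfolding T_def card_cartesian_product card_signs card_signs1 ..
    also have "\<dots> = 2 ^ (CARD('n) - 1 + CARD('n))" by (rule power_add[symmetric])
    also have "CARD('n) - 1 + CARD('n) = 2 * CARD('n) - 1"
      using finite_UNIV_card_ge_0[where 'a='n] by simp
    finally show ?thesis .
  qed
  have Us: "(\<Union>t\<in>T. Et t) \<in> sets ?P" using fT Ets by (intro sets.finite_UN) auto
  have "1 \<le> measure ?P (\<Union>t\<in>T. Et t)"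
    using P.finite_measure_mono[OF cover Us] mF by simp
  also have "\<dots> \<le> (\<Sum>t\<in>T. measure ?P (Et t))"
    by (rule measure_UNION_le[OF fT Ets])
  also have "\<dots> = (\<Sum>t\<in>T. measure ?P E)" by (intro sum.cong refl mEt)
  also have "\<dots> = 2 ^ (2 * CARD('n) - 1) * measure ?P E" by (simp add: cardT)
  finally have "1 \<le> 2 ^ (2 * CARD('n) - 1) * measure ?P E" .
  then have "1 / 2 ^ (2 * CARD('n) - 1) \<le> measure ?P E"
    by (simp add: field_simps)
  then show ?thesis unfolding E_def by (simp add: power_one_over)
qed


end
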